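(* Let $\varepsilon,\varepsilon',\delta$ be positive constants with $3\varepsilon+\varepsilon/\delta\le\varepsilon'$, and let $(V_1,V_2,V_3)$ be an $\varepsilon$-typical $(\varepsilon,p)$-regular triple in a graph, where the density $d_{ij}p$ of each pair $(V_i,V_j)$ is at least $\delta p$. Then at most $4\varepsilon d_{23}p|V_2||V_3|$ edges between $V_2$ and $V_3$ are not $\varepsilon'$-good.
   Context: For disjoint $X,Y$, $d(X,Y)=e(X,Y)/(|X||Y|)$; $x=(1\pm a)y$ means $x\in[(1-a)y,(1+a)y]$. A pair $(X,Y)$ is $(\varepsilon,p)$-regular if $|d(X,Y)-d(X',Y')|\le\varepsilon p$ for all $X'\subset X,Y'\subset Y$ with $|X'|\ge\varepsilon|X|,|Y'|\ge\varepsilon|Y|$; a triple is $(\varepsilon,p)$-regular if all three pairs are. Write $d(V_i,V_j)=d_{ij}p$. For $\{i,j,k\}=\{1,2,3\}$, $v\in V_i$ is $\varepsilon$-typical if with $N_j=N(v)\cap V_j$, $N_k=N(v)\cap V_k$: $|N_j|=(1\pm\varepsilon)d_{ij}p|V_j|$, $|N_k|=(1\pm\varepsilon)d_{ik}p|V_k|$, and there exist $N_j'\subset N_j,N_k'\subset N_k$ with $|N_j'|\ge(1-\varepsilon)|N_j|,|N_k'|\ge(1-\varepsilon)|N_k|$ such that $(N_j',N_k')$ is $(\varepsilon,p)$-regular of density $(1\pm\varepsilon)d_{jk}p$. The triple is $\varepsilon$-typical if it is $(\varepsilon,p)$-regular and for each $i$ all but at most $\varepsilon|V_i|$ vertices of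 $V_i$ are $\varepsilon$-typical. An edge between $V_2$ and $V_3$ is $\varepsilon'$-good if its endpoints have at least $(1-\varepsilon')d_{12}d_{13}p^2|V_1|$ common neighbours in $V_1$. *)

theory Defs
  imports Complex_Main
begin

text \<open>A graph is a symmetric irreflexive relation E on the vertex type.
  e(X,Y) counts ordered pairs (x,y) with x in X, y in Y adjacent; for disjoint X, Y
  this is the number of edges between X and Y.\<close>

definition edges_between :: "('a \<Rightarrow> 'a \<Rightarrow> bool) \<Rightarrow> 'a set \<Rightarrow> 'a set \<Rightarrow> ('a \<times> 'a) set" where
  "edges_between E X Y = {(x, y). x \<in> X \<and> y \<in> Y \<and> E x y}"

definition e_count :: "('a \<Rightarrow> 'a \<Rightarrow> bool) \<Rightarrow> 'a set \<Rightarrow> 'a set \<Rightarrow> nat" where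
  "e_count E X Y = card (edges_between E X Y)"

definition dens :: "('a \<Rightarrow> 'a \<Rightarrow> bool) \<Rightarrow> 'a set \<Rightarrow> 'a set \<Rightarrow> real" where
  "dens E X Y = real (e_count E X Y) / (real (card X) * real (card Y))"

definition approx_eq :: "real \<Rightarrow> real \<Rightarrow> real \<Rightarrow> bool" where
  "approx_eq x a y \<longleftrightarrow> (1 - a) * y \<le> x \<and> x \<le> (1 + a) * y"

definition regular_pair :: "('a \<Rightarrow> 'a \<Rightarrow> bool) \<Rightarrow> real \<Rightarrow> real \<Rightarrow> 'a set \<Rightarrow> 'a set \<Rightarrow> bool" where
  "regular_pair E eps p X Y \<longleftrightarrow>
     (\<forall>X' Y'. X' \<subseteq> X \<and> Y' \<subseteq> Y \<and> real (card X') \<ge> eps * real (card X)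
        \<and> real (card Y') \<ge> eps * real (card Y)
        \<longrightarrow> \<bar>dens E X Y - dens E X' Y'\<bar> \<le> eps * p)"

definition regular_triple :: "('a \<Rightarrow> 'a \<Rightarrow> bool) \<Rightarrow> real \<Rightarrow> real \<Rightarrow> 'a set \<Rightarrow> 'a set \<Rightarrow> 'a set \<Rightarrow> bool" where
  "regular_triple E eps p V1 V2 V3 \<longleftrightarrow>
     regular_pair E eps p V1 V2 \<and> regular_pair E eps p V1 V3 \<and> regular_pair E eps p V2 V3"

definition nbhd :: "('a \<Rightarrow> 'a \<Rightarrow> bool) \<Rightarrow> 'a \<Rightarrow> 'a set \<Rightarrow> 'a set" where
  "nbhd E v X = {w \<in> X. E v w}"

text \<open>v in Vi is eps-typical w.r.t. the other two classes Vj, Vk. Note d_ij p = dens E Vi Vj.\<close>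
definition typical_vertex :: "('a \<Rightarrow> 'a \<Rightarrow> bool) \<Rightarrow> real \<Rightarrow> real \<Rightarrow> 'a set \<Rightarrow> 'a set \<Rightarrow> 'a set \<Rightarrow> 'a \<Rightarrow> bool" where
  "typical_vertex E eps p Vi Vj Vk v \<longleftrightarrow>
     approx_eq (real (card (nbhd E v Vj))) eps (dens E Vi Vj * real (card Vj)) \<and>
     approx_eq (real (card (nbhd E v Vk))) eps (dens E Vi Vk * real (card Vk)) \<and>
     (\<exists>Nj' Nk'. Nj' \<subseteq> nbhd E v Vj \<and> Nk' \<subseteq> nbhd E v Vk \<and>
        real (card Nj') \<ge> (1 - eps) * real (card (nbhd E v Vj)) \<and>
        real (card Nk') \<ge> (1 - eps) * real (card (nbhd E v Vk)) \<and>
        regular_pair E eps p Nj' Nk' \<and>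
        approx_eq (dens E Nj' Nk') eps (dens E Vj Vk))"

definition typical_triple :: "('a \<Rightarrow> 'a \<Rightarrow> bool) \<Rightarrow> real \<Rightarrow> real \<Rightarrow> 'a set \<Rightarrow> 'a set \<Rightarrow> 'a set \<Rightarrow> bool" where
  "typical_triple E eps p V1 V2 V3 \<longleftrightarrow>
     regular_triple E eps p V1 V2 V3 \<and>
     real (card {v \<in> V1. \<not> typical_vertex E eps p V1 V2 V3 v}) \<le> eps * real (card V1) \<and>
     real (card {v \<in> V2. \<not> typical_vertex E eps p V2 V1 V3 v}) \<le> eps * real (card V2) \<and>
     real (card {v \<in> V3. \<not> typical_vertex E eps p V3 V1 V2 v}) \<le> eps * real (card V3)"

definition good_edge :: "('a \<Rightarrow> 'a \<Rightarrow> bool) \<Rightarrow> real \<Rightarrow> 'a set \<Rightarrow> 'a set \<Rightarrow> 'a set \<Rightarrow> 'a \<Rightarrow> 'a \<Rightarrow> bool" where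
  "good_edge E eps' V1 V2 V3 u v \<longleftrightarrow>
     real (card {w \<in> V1. E u w \<and> E v w}) \<ge> (1 - eps') * dens E V1 V2 * dens E V1 V3 * real (card V1)"

end

theory Submission
  imports Defs
begin


lemma card_pairs1:
  assumes "finite A" "finite B"
  shows "card {(x,y). x \<in> A \<and> y \<in> B \<and> R x y} = (\<Sum>x\<in>A. card {y\<in>B. R x y})"
proof -
  have "{(x,y). x \<in> A \<and> y \<in> B \<and> R x y} = (SIGMA x:A. {y\<in>B. R x y})" by auto
  thus ?thesis using assms by (simp add: card_SigmaI)
qed

lemma card_pairs2:
  assumes "finite A" "finite B"
  shows "card {(x,y). x \<in> A \<and> y \<in> B \<and> R x y} = (\<Sum>y\<in>B. card {x\<in>A. R x y})"
proof -
  have "{(x,y). x \<in> A \<and> y \<in> B \<and> R x y} = prod.swap ` {(y,x). y \<in> B \<and> x \<in> A \<and> R x y}" by auto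
  hence "card {(x,y). x \<in> A \<and> y \<in> B \<and> R x y} = card {(y,x). y \<in> B \<and> x \<in> A \<and> R x y}"
    by (simp add: card_image)
  also have "\<dots> = (\<Sum>y\<in>B. card {x\<in>A. R x y})" using card_pairs1[OF assms(2,1)] by simp
  finally show ?thesis .
qed

lemma e_count_sum1: "finite A \<Longrightarrow> finite B \<Longrightarrow> e_count E A B = (\<Sum>x\<in>A. card {y\<in>B. E x y})"
  unfolding e_count_def edges_between_def by (rule card_pairs1)

lemma e_count_sum2: "finite A \<Longrightarrow> finite B \<Longrightarrow> e_count E A B = (\<Sum>y\<in>B. card {x\<in>A. E x y})"
  unfolding e_count_def edges_between_def by (rule card_pairs2)

lemma e_count_sym:
  assumes sym: "\<And>x y. E x y \<Longrightarrow> E y x" and "finite A" "finite B"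
  shows "e_count E A B = e_count E B A"
proof -
  have "e_count E A B = (\<Sum>x\<in>A. card {y\<in>B. E x y})" using assms by (simp add: e_count_sum1)
  also have "\<dots> = (\<Sum>x\<in>A. card {y\<in>B. E y x})"
    by (rule sum.cong) (auto intro!: arg_cong[where f=card] dest: sym)
  also have "\<dots> = e_count E B A" using assms by (simp add: e_count_sum2)
  finally show ?thesis .
qed

lemma dens_sym:
  assumes sym: "\<And>x y. E x y \<Longrightarrow> E y x" and "finite A" "finite B"
  shows "dens E A B = dens E B A"
  unfolding dens_def using e_count_sym[OF assms] by (simp add: mult.commute)

lemma dens_nonneg: "dens E A B \<ge> 0" unfolding dens_def by simp

lemma finite_edges: "finite A \<Longrightarrow> finite B \<Longrightarrow> finite (edges_between E A B)"
  unfolding edges_between_def by (rule finite_subset[of _ "A \<times> B"]) auto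

lemma e_count_mono: "finite X \<Longrightarrow> finite Y \<Longrightarrow> A \<subseteq> X \<Longrightarrow> B \<subseteq> Y \<Longrightarrow> e_count E A B \<le> e_count E X Y"
  unfolding e_count_def by (rule card_mono[OF finite_edges]) (auto simp: edges_between_def)

lemma e_count_dens: "finite A \<Longrightarrow> finite B \<Longrightarrow> A \<noteq> {} \<Longrightarrow> B \<noteq> {} \<Longrightarrow>
   real (e_count E A B) = dens E A B * real (card A) * real (card B)"
  unfolding dens_def by simp

lemma superset_card:
  assumes "finite V" "A \<subseteq> V" "card A \<le> k" "k \<le> card V"
  obtains X where "A \<subseteq> X" "X \<subseteq> V" "card X = k"
proof -
  have "k - card A \<le> card (V - A)" using assms by (simp add: card_Diff_subset finite_subset)
  then obtain T where T: "T \<subseteq> V - A" "card T = k - card A" "finite T" by (rule obtain_subset_with_card_n)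
  have fA: "finite A" using assms finite_subset by blast
  have "card (A \<union> T) = card A + card T" using T fA by (subst card_Un_disjoint) auto
  hence "card (A \<union> T) = k" using T assms by simp
  thus ?thesis using that[of "A \<union> T"] T assms by auto
qed



lemma typ_bad:
  fixes E :: "'a \<Rightarrow> 'a \<Rightarrow> bool"
  assumes sym: "\<And>x y. E x y \<Longrightarrow> E y x"
    and fin: "finite Vj" "finite Vk"
    and eps: "eps > 0" "eps < 1"
    and htv: "typical_vertex E eps p Vi Vj Vk x"
    and dij: "dens E Vi Vj > 0" and dik: "dens E Vi Vk > 0" and djk: "dens E Vj Vk > 0"
    and tol: "eps * p \<le> r * dens E Vj Vk"
    and th0: "\<theta> > 0" and th1: "\<theta> \<le> (1 - eps - r) * (1 - eps)^2"
  shows "real (card {y\<in>Vk. E x y \<and> real (card {w\<in>Vj. E x w \<and> E y w}) < \<theta> * dens E Vi Vj * dens E Vj Vk * real (card Vj)})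
          \<le> 2 * eps * real (card {y\<in>Vk. E x y})"
proof -
  define N where "N = nbhd E x Vj"
  define M where "M = nbhd E x Vk"
  define D where "D = dens E Vj Vk"
  define thr where "thr = \<theta> * dens E Vi Vj * D * real (card Vj)"
  define bad where "bad y \<longleftrightarrow> real (card {w\<in>Vj. E x w \<and> E y w}) < thr" for y
  from htv obtain Nj' Nk' where
    aN: "approx_eq (real (card N)) eps (dens E Vi Vj * real (card Vj))" and
    aM: "approx_eq (real (card M)) eps (dens E Vi Vk * real (card Vk))" and
    s1: "Nj' \<subseteq> N" and s2: "Nk' \<subseteq> M" and
    c1: "real (card Nj') \<ge> (1 - eps) * real (card N)" and
    c2: "real (card Nk') \<ge> (1 - eps) * real (card M)" and
    reg: "regular_pair E eps p Nj' Nk'" and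
    ad: "approx_eq (dens E Nj' Nk') eps D"
    unfolding typical_vertex_def N_def M_def D_def by blast
  have finN: "finite N" "finite M" using fin by (auto simp: N_def M_def nbhd_def)
  have finN': "finite Nj'" "finite Nk'" using finN s1 s2 finite_subset by blast+
  have Vj0: "real (card Vj) > 0"
  proof -
    have "card Vj \<noteq> 0" proof assume "card Vj = 0" then have "e_count E Vj Vk = 0"
        using fin by (simp add: e_count_sum1)
      thus False using djk by (simp add: dens_def) qed
    thus ?thesis by simp
  qed
  have Vk0: "real (card Vk) > 0"
  proof -
    have "card Vk \<noteq> 0" proof assume "card Vk = 0" then have "e_count E Vj Vk = 0"
        using fin by (simp add: e_count_sum2)
      thus False using djk by (simp add: dens_def) qed
    thus ?thesis by simp
  qed
  have Nlow: "real (card N) \<ge> (1 - eps) * (dens E Vi Vj * real (card Vj))" using aN by (simp add: approx_eq_def)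
  have Mlow: "real (card M) \<ge> (1 - eps) * (dens E Vi Vk * real (card Vk))" using aM by (simp add: approx_eq_def)
  have "(1 - eps) * (dens E Vi Vk * real (card Vk)) > 0" using eps dik Vk0 by simp
  hence M0: "real (card M) > 0" using Mlow by linarith
  hence "(1 - eps) * real (card M) > 0" using eps by simp
  hence Nk'0: "real (card Nk') > 0" using c2 by linarith
  have Nj'low: "real (card Nj') \<ge> (1 - eps)^2 * dens E Vi Vj * real (card Vj)"
  proof -
    have "(1 - eps) * real (card N) \<ge> (1 - eps) * ((1 - eps) * (dens E Vi Vj * real (card Vj)))"
      using Nlow eps by (intro mult_left_mono) auto
    thus ?thesis using c1 by (simp add: power2_eq_square algebra_simps)
  qed
  define X where "X = {y\<in>Nk'. bad y}"
  have finX: "finite X" using finN' by (simp add: X_def)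
  have Xlt: "real (card X) < eps * real (card Nk')"
  proof (rule ccontr)
    assume "\<not> ?thesis"
    hence cX: "real (card X) \<ge> eps * real (card Nk')" by simp
    have X0: "real (card X) > 0" using cX eps Nk'0 by (smt (verit) mult_pos_pos)
    have XNk: "X \<subseteq> Nk'" by (auto simp: X_def)
    have "real (card Nj') \<ge> eps * real (card Nj')" using eps by (simp add: mult_left_le_one_le)
    hence "\<bar>dens E Nj' Nk' - dens E Nj' X\<bar> \<le> eps * p" using reg cX XNk
      unfolding regular_pair_def by blast
    moreover have "dens E Nj' Nk' \<ge> (1 - eps) * D" using ad by (simp add: approx_eq_def)
    ultimately have dX: "dens E Nj' X \<ge> (1 - eps - r) * D" using tol unfolding D_def by (simp add: algebra_simps)
    have rpos: "1 - eps - r > 0"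
    proof -
      have "(1 - eps)^2 > 0" using eps by simp
      thus ?thesis using th0 th1 by (smt (verit) mult_nonpos_nonneg zero_le_power2)
    qed
    have Nj'0: "real (card Nj') > 0"
      using Nj'low eps dij Vj0 by (smt (verit) mult_pos_pos zero_less_power)
    have "real (e_count E Nj' X) = dens E Nj' X * real (card Nj') * real (card X)"
      using Nj'0 X0 by (simp add: dens_def)
    also have "\<dots> \<ge> ((1 - eps - r) * D) * ((1 - eps)^2 * dens E Vi Vj * real (card Vj)) * real (card X)"
      using dX Nj'low X0 rpos djk D_def dens_nonneg[of E Nj' X] dij Vj0
      by (intro mult_right_mono mult_mono) auto
    finally have low: "real (e_count E Nj' X) \<ge> ((1 - eps - r) * (1 - eps)^2) * (dens E Vi Vj * D * real (card Vj)) * real (card X)"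
      by (simp add: algebra_simps)
    have "((1 - eps - r) * (1 - eps)^2) * (dens E Vi Vj * D * real (card Vj)) \<ge> \<theta> * (dens E Vi Vj * D * real (card Vj))"
      using th1 dij djk Vj0 D_def by (intro mult_right_mono) auto
    hence low2: "real (e_count E Nj' X) \<ge> thr * real (card X)"
      using low X0 unfolding thr_def by (smt (verit) mult_right_mono mult.assoc)
    have "real (e_count E Nj' X) = (\<Sum>y\<in>X. real (card {w\<in>Nj'. E w y}))"
      using finN' finX by (simp add: e_count_sum2)
    also have "\<dots> < (\<Sum>y\<in>X. thr)"
    proof (rule sum_strict_mono)
      show "finite X" by fact
      show "X \<noteq> {}" using X0 by auto
      fix y assume y: "y \<in> X"
      have "{w\<in>Nj'. E w y} \<subseteq> {w\<in>Vj. E x w \<and> E y w}" using s1 by (auto simp: N_def nbhd_def dest: sym)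
      hence "card {w\<in>Nj'. E w y} \<le> card {w\<in>Vj. E x w \<and> E y w}" using fin by (intro card_mono) auto
      moreover have "bad y" using y by (simp add: X_def)
      ultimately show "real (card {w\<in>Nj'. E w y}) < thr" unfolding bad_def by linarith
    qed
    also have "\<dots> = thr * real (card X)" by simp
    finally show False using low2 by linarith
  qed
  have sub: "{y\<in>Vk. E x y \<and> bad y} \<subseteq> (M - Nk') \<union> X" using s2 by (auto simp: M_def nbhd_def X_def)
  have "card {y\<in>Vk. E x y \<and> bad y} \<le> card ((M - Nk') \<union> X)"
    using sub finN finX by (intro card_mono) auto
  also have "\<dots> \<le> card (M - Nk') + card X" by (rule card_Un_le)
  also have "card (M - Nk') = card M - card Nk'" using s2 finN' by (simp add: card_Diff_subset)
  finally have A: "real (card {y\<in>Vk. E x y \<and> bad y}) \<le> real (card M - card Nk') + real (card X)"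
    by linarith
  have B: "real (card M - card Nk') = real (card M) - real (card Nk')"
    using s2 finN by (simp add: card_mono of_nat_diff)
  have "real (card {y\<in>Vk. E x y \<and> bad y}) \<le> real (card M) - real (card Nk') + real (card X)"
    using A B by linarith
  also have "\<dots> \<le> 2 * eps * real (card M)"
  proof -
    have "real (card Nk') \<le> real (card M)" using s2 finN by (simp add: card_mono)
    have "(1 - eps) * real (card Nk') \<ge> (1 - eps) * ((1 - eps) * real (card M))"
      using c2 eps by (intro mult_left_mono) auto
    moreover have "eps * eps * real (card M) \<ge> 0" by simp
    ultimately show ?thesis using Xlt by (simp add: algebra_simps)
  qed
  finally show ?thesis unfolding bad_def thr_def D_def M_def nbhd_def .
qed


lemma final_arith:
  fixes B a b P Q K e eps \<rho> :: real
  assumes "a + P = e" "b + Q = e" "a \<ge> 0" "b \<ge> 0" "P \<ge> 0" "Q \<ge> 0" "K \<ge> 0" "e \<ge> 0"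
    "B \<le> 2*eps*a + P" "B \<le> 2*eps*b + Q" "B \<le> 2*eps*a + 2*eps*b + K"
    "K \<le> 4*(1+\<rho>)*eps^2*e" "eps > 0" "\<rho> \<ge> 0" "\<rho> + 3*eps < 1"
  shows "B \<le> 4*eps*e"
proof (cases "(1-2*eps)*P \<le> 2*eps*e \<or> (1-2*eps)*Q \<le> 2*eps*e")
  case True
  then show ?thesis
  proof
    assume h: "(1-2*eps)*P \<le> 2*eps*e"
    have "2*eps*a = 2*eps*e - 2*eps*P" by (simp add: assms(1)[symmetric] algebra_simps)
    thus ?thesis using h assms(9) by (simp add: algebra_simps)
  next
    assume h: "(1-2*eps)*Q \<le> 2*eps*e"
    have "2*eps*b = 2*eps*e - 2*eps*Q" by (simp add: assms(2)[symmetric] algebra_simps)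
    thus ?thesis using h assms(10) by (simp add: algebra_simps)
  qed
next
  case False
  hence h2: "(1-2*eps)*P > 2*eps*e" and h3: "(1-2*eps)*Q > 2*eps*e" by auto
  have pos: "1 - 2*eps > 0" using assms by simp
  have "(1-2*eps)*K \<le> (1-2*eps)*(4*(1+\<rho>)*eps^2*e)" using pos assms(12) by (intro mult_left_mono) auto
  also have "\<dots> = ((1-2*eps)*(1+\<rho>)) * (4*eps^2*e)" by (simp add: algebra_simps)
  also have "\<dots> \<le> 2 * (4*eps^2*e)"
  proof (rule mult_right_mono)
    have "(1-2*eps)*(1+\<rho>) \<le> 1+\<rho>" using assms mult_right_mono[of "1-2*eps" 1 "1+\<rho>"] by simp
    thus "(1-2*eps)*(1+\<rho>) \<le> 2" using assms by linarith
    show "0 \<le> 4*eps^2*e" using assms by simp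
  qed
  also have "\<dots> = 2*eps*(2*eps*e) + 2*eps*(2*eps*e)" by (simp add: power2_eq_square algebra_simps)
  also have "\<dots> \<le> 2*eps*((1-2*eps)*P) + 2*eps*((1-2*eps)*Q)"
    using h2 h3 assms by (intro add_mono mult_left_mono) auto
  also have "\<dots> = (1-2*eps)*(2*eps*(P+Q))" by (simp add: algebra_simps)
  finally have "K \<le> 2*eps*(P+Q)" using pos by simp
  moreover have "2*eps*a = 2*eps*e - 2*eps*P" by (simp add: assms(1)[symmetric] algebra_simps)
  moreover have "2*eps*b = 2*eps*e - 2*eps*Q" by (simp add: assms(2)[symmetric] algebra_simps)
  ultimately show ?thesis using assms(11) by (simp add: algebra_simps)
qed


theorem proposition2p12:
  fixes E :: "'a \<Rightarrow> 'a \<Rightarrow> bool" and V1 V2 V3 :: "'a set"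
    and eps eps' \<delta> p :: real
  assumes sym: "\<And>x y. E x y \<Longrightarrow> E y x"
    and irrefl: "\<And>x. \<not> E x x"
    and fin: "finite V1" "finite V2" "finite V3"
    and disj: "V1 \<inter> V2 = {}" "V1 \<inter> V3 = {}" "V2 \<inter> V3 = {}"
    and pos: "eps > 0" "eps' > 0" "\<delta> > 0" "p > 0"
    and hconst: "3 * eps + eps / \<delta> \<le> eps'"
    and htyp: "typical_triple E eps p V1 V2 V3"
    and d12: "dens E V1 V2 \<ge> \<delta> * p"
    and d13: "dens E V1 V3 \<ge> \<delta> * p"
    and d23: "dens E V2 V3 \<ge> \<delta> * p"
  shows "real (card {(u, v) \<in> edges_between E V2 V3. \<not> good_edge E eps' V1 V2 V3 u v})
           \<le> 4 * eps * dens E V2 V3 * real (card V2) * real (card V3)"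
proof (cases "eps' \<ge> 1")
  case True
  have eq: "{(u, v) \<in> edges_between E V2 V3. \<not> good_edge E eps' V1 V2 V3 u v} = {}"
  proof -
    have "good_edge E eps' V1 V2 V3 u v" for u v
    proof -
      have "(1 - eps') * (dens E V1 V2 * dens E V1 V3 * real (card V1)) \<le> 0"
        using True dens_nonneg[of E V1 V2] dens_nonneg[of E V1 V3]
        by (intro mult_nonpos_nonneg) auto
      thus ?thesis unfolding good_edge_def by (simp add: mult.assoc)
    qed
    thus ?thesis by auto
  qed
  have "0 \<le> 4 * eps * dens E V2 V3 * real (card V2) * real (card V3)"
    using pos dens_nonneg[of E V2 V3] by simp
  thus ?thesis unfolding eq by simp
next
  case False
  hence e1: "eps' < 1" by simp
  define \<rho> where "\<rho> = eps / \<delta>"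
  define \<theta> where "\<theta> = 1 - eps'"
  define D where "D = dens E V2 V3"
  define n2 where "n2 = real (card V2)"
  define n3 where "n3 = real (card V3)"
  have \<rho>0: "\<rho> \<ge> 0" using pos by (simp add: \<rho>_def)
  have \<rho>1: "\<rho> + 3 * eps < 1" using hconst e1 by (simp add: \<rho>_def)
  have eps1: "eps < 1" using \<rho>1 \<rho>0 by linarith
  have \<theta>0: "\<theta> > 0" using e1 by (simp add: \<theta>_def)
  have \<theta>1: "\<theta> \<le> (1 - eps - \<rho>) * (1 - eps)^2"
  proof -
    have "(1 - eps - \<rho>) * (1 - eps)^2 = (1 - 3*eps - \<rho>) + 2*eps*(eps+\<rho>) + eps^2*(1-eps-\<rho>)"
      by (simp add: power2_eq_square algebra_simps)
    moreover have "2*eps*(eps+\<rho>) \<ge> 0" using pos \<rho>0 by simp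
    moreover have "eps^2*(1-eps-\<rho>) \<ge> 0" using \<rho>1 pos by simp
    moreover have "\<theta> \<le> 1 - 3*eps - \<rho>" using hconst by (simp add: \<theta>_def \<rho>_def)
    ultimately show ?thesis by linarith
  qed
  have tolgen: "eps * p \<le> \<rho> * x" if "x \<ge> \<delta> * p" for x
  proof -
    have "\<rho> * x \<ge> \<rho> * (\<delta> * p)" using that \<rho>0 by (intro mult_left_mono) auto
    moreover have "\<rho> * (\<delta> * p) = eps * p" using pos by (simp add: \<rho>_def)
    ultimately show ?thesis by simp
  qed
  have dp: "\<delta> * p > 0" using pos by simp
  have d12': "dens E V2 V1 = dens E V1 V2" using dens_sym[of E, OF sym fin(2) fin(1)] .
  have d13': "dens E V3 V1 = dens E V1 V3" using dens_sym[of E, OF sym fin(3) fin(1)] .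
  have D0: "D > 0" using d23 dp by (simp add: D_def)
  have n20: "n2 > 0"
  proof -
    have "card V2 \<noteq> 0" proof assume "card V2 = 0" thus False using D0 by (simp add: D_def dens_def) qed
    thus ?thesis by (simp add: n2_def)
  qed
  have n30: "n3 > 0"
  proof -
    have "card V3 \<noteq> 0" proof assume "card V3 = 0" thus False using D0 by (simp add: D_def dens_def) qed
    thus ?thesis by (simp add: n3_def)
  qed
  define e where "e = real (e_count E V2 V3)"
  have eD: "e = D * n2 * n3" using n20 n30 by (simp add: e_def D_def dens_def n2_def n3_def)
  define good where "good u v \<longleftrightarrow> good_edge E eps' V1 V2 V3 u v" for u v
  define Bad where "Bad = {(u, v) \<in> edges_between E V2 V3. \<not> good_edge E eps' V1 V2 V3 u v}"
  define T2 where "T2 = {u\<in>V2. typical_vertex E eps p V2 V1 V3 u}"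
  define A2 where "A2 = {u\<in>V2. \<not> typical_vertex E eps p V2 V1 V3 u}"
  define T3 where "T3 = {v\<in>V3. typical_vertex E eps p V3 V1 V2 v}"
  define A3 where "A3 = {v\<in>V3. \<not> typical_vertex E eps p V3 V1 V2 v}"
  have finT: "finite T2" "finite A2" "finite T3" "finite A3" using fin by (auto simp: T2_def A2_def T3_def A3_def)
  have finBad: "finite Bad" unfolding Bad_def
    by (rule finite_subset[OF _ finite_edges[OF fin(2,3)]]) auto
  have Bad_sub: "Bad \<subseteq> V2 \<times> V3" by (auto simp: Bad_def edges_between_def)
  have bu: "real (card {v\<in>V3. E u v \<and> \<not> good u v}) \<le> 2 * eps * real (card {v\<in>V3. E u v})"
    if u: "u \<in> T2" for u
  proof -
    have tv: "typical_vertex E eps p V2 V1 V3 u" using u by (simp add: T2_def)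
    have "real (card {y\<in>V3. E u y \<and> real (card {w\<in>V1. E u w \<and> E y w}) < \<theta> * dens E V2 V1 * dens E V1 V3 * real (card V1)})
          \<le> 2 * eps * real (card {y\<in>V3. E u y})"
      by (rule typ_bad[of E, OF sym fin(1,3) pos(1) eps1 tv _ _ _ tolgen[OF d13] \<theta>0 \<theta>1])
        (use d12 d13 d23 dp d12' in auto)
    moreover have "{y\<in>V3. E u y \<and> real (card {w\<in>V1. E u w \<and> E y w}) < \<theta> * dens E V2 V1 * dens E V1 V3 * real (card V1)}
       = {v\<in>V3. E u v \<and> \<not> good u v}"
      by (auto simp: good_def good_edge_def d12' \<theta>_def not_le)
    ultimately show ?thesis by simp
  qed
  have bv: "real (card {u\<in>V2. E u v \<and> \<not> good u v}) \<le> 2 * eps * real (card {u\<in>V2. E u v})"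
    if v: "v \<in> T3" for v
  proof -
    have tv: "typical_vertex E eps p V3 V1 V2 v" using v by (simp add: T3_def)
    have "real (card {y\<in>V2. E v y \<and> real (card {w\<in>V1. E v w \<and> E y w}) < \<theta> * dens E V3 V1 * dens E V1 V2 * real (card V1)})
          \<le> 2 * eps * real (card {y\<in>V2. E v y})"
      by (rule typ_bad[of E, OF sym fin(1,2) pos(1) eps1 tv _ _ _ tolgen[OF d12] \<theta>0 \<theta>1])
        (use d12 d13 d23 dp d13' dens_sym[of E, OF sym fin(2,3)] in auto)
    moreover have "{y\<in>V2. E v y \<and> real (card {w\<in>V1. E v w \<and> E y w}) < \<theta> * dens E V3 V1 * dens E V1 V2 * real (card V1)}
       = {u\<in>V2. E u v \<and> \<not> good u v}"
      by (auto simp: good_def good_edge_def d13' \<theta>_def not_le conj_commute mult.commute mult.left_commute dest: sym)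
    moreover have "{y\<in>V2. E v y} = {u\<in>V2. E u v}" by (auto dest: sym)
    ultimately show ?thesis by simp
  qed
  have S1: "real (card {q\<in>Bad. fst q \<in> T2}) \<le> 2 * eps * real (e_count E T2 V3)"
  proof -
    have "{q\<in>Bad. fst q \<in> T2} = {(u,v). u \<in> T2 \<and> v \<in> V3 \<and> (E u v \<and> \<not> good u v)}"
      by (auto simp: Bad_def edges_between_def good_def T2_def)
    hence "card {q\<in>Bad. fst q \<in> T2} = (\<Sum>u\<in>T2. card {v\<in>V3. E u v \<and> \<not> good u v})"
      using card_pairs1[OF finT(1) fin(3)] by simp
    hence "real (card {q\<in>Bad. fst q \<in> T2}) = (\<Sum>u\<in>T2. real (card {v\<in>V3. E u v \<and> \<not> good u v}))" by simp
    also have "\<dots> \<le> (\<Sum>u\<in>T2. 2 * eps * real (card {v\<in>V3. E u v}))" by (rule sum_mono) (rule bu)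
    also have "\<dots> = 2 * eps * real (e_count E T2 V3)"
      by (simp add: e_count_sum1[OF finT(1) fin(3)] sum_distrib_left)
    finally show ?thesis .
  qed
  have S2: "real (card {q\<in>Bad. snd q \<in> T3}) \<le> 2 * eps * real (e_count E V2 T3)"
  proof -
    have "{q\<in>Bad. snd q \<in> T3} = {(u,v). u \<in> V2 \<and> v \<in> T3 \<and> (E u v \<and> \<not> good u v)}"
      by (auto simp: Bad_def edges_between_def good_def T3_def)
    hence "card {q\<in>Bad. snd q \<in> T3} = (\<Sum>v\<in>T3. card {u\<in>V2. E u v \<and> \<not> good u v})"
      using card_pairs2[OF fin(2) finT(3)] by simp
    hence "real (card {q\<in>Bad. snd q \<in> T3}) = (\<Sum>v\<in>T3. real (card {u\<in>V2. E u v \<and> \<not> good u v}))" by simp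
    also have "\<dots> \<le> (\<Sum>v\<in>T3. 2 * eps * real (card {u\<in>V2. E u v}))" by (rule sum_mono) (rule bv)
    also have "\<dots> = 2 * eps * real (e_count E V2 T3)"
      by (simp add: e_count_sum2[OF fin(2) finT(3)] sum_distrib_left)
    finally show ?thesis .
  qed
  have split2: "e_count E V2 V3 = e_count E T2 V3 + e_count E A2 V3"
  proof -
    have "V2 = T2 \<union> A2" "T2 \<inter> A2 = {}" by (auto simp: T2_def A2_def)
    thus ?thesis using finT fin by (simp add: e_count_sum1 sum.union_disjoint)
  qed
  have split3: "e_count E V2 V3 = e_count E V2 T3 + e_count E V2 A3"
  proof -
    have "V3 = T3 \<union> A3" "T3 \<inter> A3 = {}" by (auto simp: T3_def A3_def)
    thus ?thesis using finT fin by (simp add: e_count_sum2 sum.union_disjoint)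
  qed
  have cA2: "card {q\<in>Bad. fst q \<in> A2} \<le> e_count E A2 V3"
    unfolding e_count_def by (rule card_mono[OF finite_edges[OF finT(2) fin(3)]])
      (auto simp: Bad_def edges_between_def)
  have cA3: "card {q\<in>Bad. snd q \<in> A3} \<le> e_count E V2 A3"
    unfolding e_count_def by (rule card_mono[OF finite_edges[OF fin(2) finT(4)]])
      (auto simp: Bad_def edges_between_def)
  have cAA: "card {q\<in>Bad. fst q \<in> A2 \<and> snd q \<in> A3} \<le> e_count E A2 A3"
    unfolding e_count_def by (rule card_mono[OF finite_edges[OF finT(2) finT(4)]])
      (auto simp: Bad_def edges_between_def)
  have B1: "card Bad \<le> card {q\<in>Bad. fst q \<in> T2} + card {q\<in>Bad. fst q \<in> A2}"
  proof -
    have "Bad = {q\<in>Bad. fst q \<in> T2} \<union> {q\<in>Bad. fst q \<in> A2}" using Bad_sub by (auto simp: T2_def A2_def)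
    hence "card Bad = card ({q\<in>Bad. fst q \<in> T2} \<union> {q\<in>Bad. fst q \<in> A2})" by simp
    thus ?thesis using card_Un_le by simp
  qed
  have B2: "card Bad \<le> card {q\<in>Bad. snd q \<in> T3} + card {q\<in>Bad. snd q \<in> A3}"
  proof -
    have "Bad = {q\<in>Bad. snd q \<in> T3} \<union> {q\<in>Bad. snd q \<in> A3}" using Bad_sub by (auto simp: T3_def A3_def)
    hence "card Bad = card ({q\<in>Bad. snd q \<in> T3} \<union> {q\<in>Bad. snd q \<in> A3})" by simp
    thus ?thesis using card_Un_le by simp
  qed
  have B3: "card Bad \<le> card {q\<in>Bad. fst q \<in> T2} + card {q\<in>Bad. snd q \<in> T3} + card {q\<in>Bad. fst q \<in> A2 \<and> snd q \<in> A3}"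
  proof -
    have "Bad = ({q\<in>Bad. fst q \<in> T2} \<union> {q\<in>Bad. snd q \<in> T3}) \<union> {q\<in>Bad. fst q \<in> A2 \<and> snd q \<in> A3}"
      using Bad_sub by (auto simp: T2_def A2_def T3_def A3_def)
    hence "card Bad = card (({q\<in>Bad. fst q \<in> T2} \<union> {q\<in>Bad. snd q \<in> T3}) \<union> {q\<in>Bad. fst q \<in> A2 \<and> snd q \<in> A3})" by simp
    moreover have "card (({q\<in>Bad. fst q \<in> T2} \<union> {q\<in>Bad. snd q \<in> T3}) \<union> {q\<in>Bad. fst q \<in> A2 \<and> snd q \<in> A3})
      \<le> card ({q\<in>Bad. fst q \<in> T2} \<union> {q\<in>Bad. snd q \<in> T3}) + card {q\<in>Bad. fst q \<in> A2 \<and> snd q \<in> A3}"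
      by (rule card_Un_le)
    moreover have "card ({q\<in>Bad. fst q \<in> T2} \<union> {q\<in>Bad. snd q \<in> T3}) \<le> card {q\<in>Bad. fst q \<in> T2} + card {q\<in>Bad. snd q \<in> T3}"
      by (rule card_Un_le)
    ultimately show ?thesis by linarith
  qed
  have reg23: "regular_pair E eps p V2 V3" using htyp by (simp add: typical_triple_def regular_triple_def)
  have cardA2: "real (card A2) \<le> eps * n2" using htyp by (simp add: typical_triple_def A2_def n2_def)
  have cardA3: "real (card A3) \<le> eps * n3" using htyp by (simp add: typical_triple_def A3_def n3_def)
  have ext: "\<exists>X. A \<subseteq> X \<and> X \<subseteq> V \<and> eps * real (card V) \<le> real (card X) \<and> real (card X) \<le> 2 * eps * real (card V)"
    if fV: "finite V" and AV: "A \<subseteq> V" and Ane: "A \<noteq> {}" and cA: "real (card A) \<le> eps * real (card V)" for A V :: "'a set"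
  proof -
    define k where "k = nat \<lceil>eps * real (card V)\<rceil>"
    have cA1: "card A \<ge> 1" using Ane fV AV finite_subset by (metis One_nat_def Suc_leI card_gt_0_iff)
    hence ge1: "eps * real (card V) \<ge> 1" using cA by linarith
    have kr: "real k = of_int \<lceil>eps * real (card V)\<rceil>" unfolding k_def using ge1 by simp
    have k1: "real k \<ge> eps * real (card V)" using kr by (simp add: le_of_int_ceiling)
    have k2: "real k \<le> eps * real (card V) + 1" using kr of_int_ceiling_le_add_one by simp
    have "card A \<le> k"
    proof -
      have "real (card A) \<le> real k" using cA k1 by linarith
      thus ?thesis by simp
    qed
    moreover have "k \<le> card V"
    proof -
      have "eps * real (card V) \<le> real (card V)" by (rule mult_left_le_one_le) (use eps1 pos in auto)
      hence "\<lceil>eps * real (card V)\<rceil> \<le> int (card V)" by (simp add: ceiling_le_iff)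
      thus ?thesis unfolding k_def by (metis nat_int nat_mono)
    qed
    ultimately obtain X where X: "A \<subseteq> X" "X \<subseteq> V" "card X = k" using superset_card[OF fV AV] by blast
    thus ?thesis using k1 k2 ge1 by (intro exI[of _ X]) auto
  qed
  have KK: "real (e_count E A2 A3) \<le> 4 * (1 + \<rho>) * eps^2 * e"
  proof (cases "A2 = {} \<or> A3 = {}")
    case True
    hence "e_count E A2 A3 = 0" using finT by (auto simp: e_count_sum1)
    moreover have "0 \<le> 4 * (1 + \<rho>) * eps^2 * e" using \<rho>0 by (simp add: e_def)
    ultimately show ?thesis by simp
  next
    case False
    obtain X where X: "A2 \<subseteq> X" "X \<subseteq> V2" "eps * n2 \<le> real (card X)" "real (card X) \<le> 2 * eps * n2"
      using ext[OF fin(2), of A2] False cardA2 by (auto simp: A2_def n2_def)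
    obtain Y where Y: "A3 \<subseteq> Y" "Y \<subseteq> V3" "eps * n3 \<le> real (card Y)" "real (card Y) \<le> 2 * eps * n3"
      using ext[OF fin(3), of A3] False cardA3 by (auto simp: A3_def n3_def)
    have finXY: "finite X" "finite Y" using X Y fin finite_subset by blast+
    have "\<bar>dens E V2 V3 - dens E X Y\<bar> \<le> eps * p" using reg23 X Y unfolding regular_pair_def n2_def n3_def by blast
    hence dXY: "dens E X Y \<le> (1 + \<rho>) * D" using tolgen[OF d23] by (simp add: D_def algebra_simps)
    have Xne: "X \<noteq> {}" "Y \<noteq> {}" using X Y False by auto
    have "real (e_count E A2 A3) \<le> real (e_count E X Y)" using e_count_mono[OF finXY X(1) Y(1)] by simp
    also have "\<dots> = dens E X Y * real (card X) * real (card Y)" using e_count_dens[OF finXY Xne] .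
    also have "\<dots> \<le> ((1 + \<rho>) * D) * (2 * eps * n2) * (2 * eps * n3)"
      using dXY X Y dens_nonneg[of E X Y] by (intro mult_mono) auto
    also have "\<dots> = 4 * (1 + \<rho>) * eps^2 * e" by (simp add: eD power2_eq_square algebra_simps)
    finally show ?thesis .
  qed
  have "real (card Bad) \<le> 4 * eps * e"
  proof (rule final_arith[where B="real (card Bad)" and a="real (e_count E T2 V3)" and b="real (e_count E V2 T3)" and P="real (e_count E A2 V3)"
        and Q="real (e_count E V2 A3)" and K="real (e_count E A2 A3)" and e=e and eps=eps and \<rho>=\<rho>])
    show "real (e_count E T2 V3) + real (e_count E A2 V3) = e" using split2 by (simp add: e_def)
    show "real (e_count E V2 T3) + real (e_count E V2 A3) = e" using split3 by (simp add: e_def)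
    show "real (card Bad) \<le> 2 * eps * real (e_count E T2 V3) + real (e_count E A2 V3)"
      using B1 S1 cA2 by linarith
    show "real (card Bad) \<le> 2 * eps * real (e_count E V2 T3) + real (e_count E V2 A3)"
      using B2 S2 cA3 by linarith
    show "real (card Bad) \<le> 2 * eps * real (e_count E T2 V3) + 2 * eps * real (e_count E V2 T3) + real (e_count E A2 A3)"
      using B3 S1 S2 cAA by linarith
  qed (use KK pos \<rho>0 \<rho>1 in \<open>auto simp: e_def\<close>)
  thus ?thesis by (simp add: Bad_def eD D_def n2_def n3_def mult.assoc)
qed
end
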